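(* Let $q=p^{m_0}$ with $p$ prime and let $\rho$ be a permutation of $\{0,1,2,\ldots\}$. Let $n,m$ be nonnegative integers and $y\in\mathbb{Z}_p$. Set $$s_1:=\sum_{k=0}^{m}\binom{m+n-k}{k,\,m-k,\,n-k}\binom{y}{\rho_\ast(m+n-k)},$$ $$s_2:=\sum_{k=0}^{\rho_\ast m}\binom{\rho_\ast m+\rho_\ast n-k}{k,\,\rho_\ast m-k,\,\rho_\ast n-k}\binom{y}{\rho_\ast m+\rho_\ast n-k}.$$ Then $s_1\equiv s_2\pmod{p}$ in $\mathbb{Z}_p$.
   Context: For $y\in\mathbb{Z}_p$ written $q$-adically as $y=\sum_{j\ge0}c_jq^j$ with $0\le c_j<q$, set $\rho_\ast y:=\sum_{j\ge0}c_jq^{\rho(j)}$; it maps nonnegative integers to nonnegative integers. For $y\in\mathbb{Z}_p$ and an integer $j\ge0$, $\binom{y}{j}=y(y-1)\cdots(y-j+1)/j!\in\mathbb{Z}_p$. The multinomial coefficient $\binom{N}{a,b,c}$ with $a+b+c=N$ denotes $N!/(a!\,b!\,c!)$, taken to be $0$ if any of $a,b,c$ is negative. *)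

theory Defs
  imports Complex_Main "HOL-Computational_Algebra.Primes"
begin

text \<open>p-adic integers, modelled as the inverse limit of the rings Z/p^k Z:
  a p-adic integer is a compatible sequence x with 0 <= x k < p^k and
  x k = x (k+1) mod p^k.\<close>

definition Zp :: "nat \<Rightarrow> (nat \<Rightarrow> int) set" where
  "Zp p = {x. \<forall>k. 0 \<le> x k \<and> x k < int p ^ k \<and> x k = x (Suc k) mod int p ^ k}"

definition zp_add :: "nat \<Rightarrow> (nat \<Rightarrow> int) \<Rightarrow> (nat \<Rightarrow> int) \<Rightarrow> (nat \<Rightarrow> int)" where
  "zp_add p x y = (\<lambda>k. (x k + y k) mod int p ^ k)"

definition zp_mul :: "nat \<Rightarrow> (nat \<Rightarrow> int) \<Rightarrow> (nat \<Rightarrow> int) \<Rightarrow> (nat \<Rightarrow> int)" where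
  "zp_mul p x y = (\<lambda>k. (x k * y k) mod int p ^ k)"

definition zp_of_int :: "nat \<Rightarrow> int \<Rightarrow> (nat \<Rightarrow> int)" where
  "zp_of_int p c = (\<lambda>k. c mod int p ^ k)"

definition zp_sum :: "nat \<Rightarrow> ('a \<Rightarrow> nat \<Rightarrow> int) \<Rightarrow> 'a set \<Rightarrow> (nat \<Rightarrow> int)" where
  "zp_sum p f A = (\<lambda>k. (\<Sum>a\<in>A. f a k) mod int p ^ k)"

text \<open>Its residue mod p^k is the integer binomial of any integer representative
  of y modulo p^(k + v_p(j!)); since v_p(j!) \<le> j, the representative
  y (k+j) suffices.\<close>
definition zp_binom :: "nat \<Rightarrow> (nat \<Rightarrow> int) \<Rightarrow> nat \<Rightarrow> (nat \<Rightarrow> int)" where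
  "zp_binom p y j = (\<lambda>k. \<lfloor>(of_int (y (k + j)) :: rat) gchoose j\<rfloor> mod int p ^ k)"

definition zp_cong_p :: "nat \<Rightarrow> (nat \<Rightarrow> int) \<Rightarrow> (nat \<Rightarrow> int) \<Rightarrow> bool" where
  "zp_cong_p p x y \<longleftrightarrow> (\<exists>z\<in>Zp p. x = zp_add p y (zp_mul p (zp_of_int p (int p)) z))"

definition rho_star :: "nat \<Rightarrow> (nat \<Rightarrow> nat) \<Rightarrow> nat \<Rightarrow> nat" where
  "rho_star q \<rho> y = (\<Sum>j\<le>y. (y div q ^ j mod q) * q ^ (\<rho> j))"

definition multinom3 :: "int \<Rightarrow> int \<Rightarrow> int \<Rightarrow> int" where
  "multinom3 a b c = (if a < 0 \<or> b < 0 \<or> c < 0 then 0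
     else int (fact (nat (a + b + c)) div (fact (nat a) * fact (nat b) * fact (nat c))))"

end

theory Submission
  imports Defs "HOL-Number_Theory.Cong"
begin

lemma powdvd_aux:
  fixes p :: nat
  assumes "prime p"
  shows "0 < i \<Longrightarrow> i < p ^ d \<Longrightarrow> p ^ (c + d) dvd i * X \<Longrightarrow> p ^ (c + 1) dvd X"
proof (induction d arbitrary: i)
  case 0
  then show ?case by simp
next
  case (Suc d)
  show ?case
  proof (cases "p dvd i")
    case True
    then obtain i' where i': "i = p * i'" by blast
    have p0: "p > 0" using assms prime_gt_0_nat by blast
    have "0 < i'" using Suc.prems i' by simp
    moreover have "i' < p ^ d" using Suc.prems(2) i' p0 by simp
    moreover have "p ^ (c + d) dvd i' * X"
    proof -
      have "p * p ^ (c + d) dvd p * (i' * X)" using Suc.prems(3) i' by (simp add: mult.assoc)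
      then show ?thesis using p0 by simp
    qed
    ultimately show ?thesis using Suc.IH by blast
  next
    case False
    have "coprime p i" using False assms by (simp add: prime_imp_coprime)
    then have "coprime (p ^ (c + Suc d)) i" by simp
    then have "p ^ (c + Suc d) dvd X" using Suc.prems(3) by (simp add: coprime_dvd_mult_right_iff)
    moreover have "p ^ (c + 1) dvd p ^ (c + Suc d)" by (rule le_imp_power_dvd) simp
    ultimately show ?thesis using dvd_trans by blast
  qed
qed

lemma choose_pow_dvd:
  fixes p :: nat
  assumes "prime p" "0 < i" "i < p ^ d" "p ^ (c + d) dvd T"
  shows "p ^ (c + 1) dvd (T choose i)"
proof -
  have "i * (T choose i) = T * ((T - 1) choose (i - 1))"
    using assms(2) by (rule times_binomial_minus1_eq)
  then have "p ^ (c + d) dvd i * (T choose i)" using assms(4) by (metis dvd_mult2)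
  then show ?thesis using powdvd_aux[OF assms(1) assms(2) assms(3)] by blast
qed

lemma lt_pow_prime:
  fixes p :: nat
  assumes "prime p"
  shows "j < p ^ j"
proof -
  have "j < 2 ^ j" by (rule less_exp)
  also have "2 ^ j \<le> p ^ j" using prime_ge_2_nat[OF assms] by (simp add: power_mono)
  finally show ?thesis .
qed

lemma choose_shift_cong:
  fixes p :: nat
  assumes "prime p"
  shows "[(p ^ (t + j) * s + b) choose j = b choose j] (mod p ^ t)"
proof (cases j)
  case 0
  then show ?thesis by simp
next
  case (Suc j')
  define T where "T = p ^ (t + j) * s"
  have "(T + b) choose j = (\<Sum>k\<le>j. (T choose k) * (b choose (j - k)))"
    by (rule vandermonde[symmetric])
  also have "\<dots> = (b choose j) + (\<Sum>k\<le>j'. (T choose Suc k) * (b choose (j - Suc k)))"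
    unfolding Suc by (subst sum.atMost_Suc_shift) simp
  finally have eq: "(T + b) choose j = (b choose j) + (\<Sum>k\<le>j'. (T choose Suc k) * (b choose (j - Suc k)))" .
  have "p ^ t dvd (\<Sum>k\<le>j'. (T choose Suc k) * (b choose (j - Suc k)))"
  proof (rule dvd_sum)
    fix k assume k: "k \<in> {..j'}"
    have "Suc k < p ^ j" using k Suc lt_pow_prime[OF assms, of j] by simp
    then have "p ^ (t + 1) dvd (T choose Suc k)"
      using choose_pow_dvd[OF assms, of "Suc k" j t T] by (simp add: T_def)
    then have "p ^ t dvd (T choose Suc k)"
      by (meson dvd_trans le_add1 le_imp_power_dvd)
    then show "p ^ t dvd (T choose Suc k) * (b choose (j - Suc k))" by simp
  qed
  then show ?thesis unfolding T_def[symmetric] eq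
    by (metis cong_add_lcancel_0_nat cong_to_1'_nat cong_0_iff cong_sym mult.commute dvd_def cong_add_lcancel_nat add_0_right)
qed

lemma choose_cong_pow:
  fixes p :: nat
  assumes "prime p" "[a = b] (mod p ^ (t + j))"
  shows "[a choose j = b choose j] (mod p ^ t)"
proof (cases "b \<le> a")
  case True
  then obtain s where "a = s * p ^ (t + j) + b" using assms(2) cong_le_nat by blast
  then show ?thesis using choose_shift_cong[OF assms(1), of t j s b] by (simp add: mult.commute)
next
  case False
  then have "a \<le> b" by simp
  then obtain s where "b = s * p ^ (t + j) + a" using assms(2) cong_le_nat cong_sym by blast
  then show ?thesis using choose_shift_cong[OF assms(1), of t j s a] by (simp add: mult.commute cong_sym)
qed


lemma lucas_step:
  fixes p q :: nat
  assumes "prime p" "q = p ^ e" "e \<ge> 1" "b < q"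
  shows "[(a * q + b) choose N = (a choose (N div q)) * (b choose (N mod q))] (mod p)"
proof (induction a arbitrary: N)
  case 0
  show ?case
  proof (cases "N < q")
    case True
    then show ?thesis by simp
  next
    case False
    then have "N div q > 0" using assms prime_gt_0_nat by (simp add: div_greater_zero_iff)
    moreover have "b choose N = 0" using False assms(4) by simp
    ultimately show ?thesis by (auto simp: gr0_conv_Suc binomial_eq_0)
  qed
next
  case (Suc a)
  define X where "X = a * q + b"
  have q0: "q > 0" using assms prime_gt_0_nat by simp
  have "Suc a * q + b = q + X" unfolding X_def by simp
  have v: "(q + X) choose N = (\<Sum>k\<le>N. (q choose k) * (X choose (N - k)))"
    by (rule vandermonde[symmetric])
  have "[(\<Sum>k\<le>N. (q choose k) * (X choose (N - k))) =
         (\<Sum>k\<le>N. (if k = 0 then X choose N else 0) + (if k = q then X choose (N - q) else 0))] (mod p)"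
  proof (rule cong_sum)
    fix k assume "k \<in> {..N}"
    show "[(q choose k) * (X choose (N - k)) = (if k = 0 then X choose N else 0) + (if k = q then X choose (N - q) else 0)] (mod p)"
    proof (cases "k = 0 \<or> k = q \<or> k > q")
      case True
      then show ?thesis using q0 by (auto simp: binomial_eq_0)
    next
      case False
      then have "0 < k" "k < q" by auto
      then have "p ^ (0 + 1) dvd (q choose k)"
        using choose_pow_dvd[OF assms(1), of k e 0 q] assms(2) by simp
      then show ?thesis using False by (simp add: cong_0_iff)
    qed
  qed
  also have "(\<Sum>k\<le>N. (if k = 0 then X choose N else 0) + (if k = q then X choose (N - q) else 0))
     = (X choose N) + (if q \<le> N then X choose (N - q) else 0)"
    by (simp add: sum.distrib)
  finally have c1: "[(Suc a * q + b) choose N = (X choose N) + (if q \<le> N then X choose (N - q) else 0)] (mod p)"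
    using v unfolding \<open>Suc a * q + b = q + X\<close> by simp
  show ?case
  proof (cases "q \<le> N")
    case False
    then have "N div q = 0" "N mod q = N" by auto
    then show ?thesis using c1 Suc.IH[of N] False unfolding X_def
      by (simp add: cong_trans)
  next
    case True
    then obtain r where r: "N div q = Suc r" using q0
      by (metis div_greater_zero_iff gr0_conv_Suc)
    have "N div q = (N - q + q) div q" using True by simp
    also have "\<dots> = Suc ((N - q) div q)" using q0 by simp
    finally have "(N - q) div q = r" using r by simp
    moreover have "(N - q) mod q = N mod q" using True by (simp add: le_mod_geq)
    ultimately have "[X choose (N - q) = (a choose r) * (b choose (N mod q))] (mod p)"
      using Suc.IH[of "N - q"] unfolding X_def by simp
    then have "[(X choose N) + (X choose (N - q)) = (a choose Suc r) * (b choose (N mod q)) + (a choose r) * (b choose (N mod q))] (mod p)"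
      using Suc.IH[of N] r unfolding X_def by (simp add: cong_add)
    then have c2: "[(X choose N) + (X choose (N - q)) = (Suc a choose Suc r) * (b choose (N mod q))] (mod p)"
      by (simp add: algebra_simps)
    have c1': "[(Suc a * q + b) choose N = (X choose N) + (X choose (N - q))] (mod p)" using c1 True by simp
    show ?thesis using cong_trans[OF c1' c2] r by simp
  qed
qed

lemma lucas_iter:
  fixes p q :: nat
  assumes "prime p" "q = p ^ e" "e \<ge> 1"
  shows "[Y choose J = (\<Prod>i<D. (Y div q ^ i mod q) choose (J div q ^ i mod q)) * ((Y div q ^ D) choose (J div q ^ D))] (mod p)"
proof (induction D)
  case 0
  then show ?case by simp
next
  case (Suc D)
  have q0: "q > 0" using assms prime_gt_0_nat by simp
  let ?a = "Y div q ^ D div q" and ?b = "Y div q ^ D mod q"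
  have "Y div q ^ D = ?a * q + ?b" by simp
  then have "[(Y div q ^ D) choose (J div q ^ D) = (?a choose (J div q ^ D div q)) * (?b choose (J div q ^ D mod q))] (mod p)"
    using lucas_step[OF assms, of ?b ?a "J div q ^ D"] q0 by simp
  moreover have "Y div q ^ Suc D = ?a" "J div q ^ Suc D = J div q ^ D div q"
    by (simp_all add: div_mult2_eq[symmetric] mult.commute)
  ultimately have "[(Y div q ^ D) choose (J div q ^ D) = ((Y div q ^ D mod q) choose (J div q ^ D mod q)) * ((Y div q ^ Suc D) choose (J div q ^ Suc D))] (mod p)"
    by (simp add: mult.commute)
  then have "[(\<Prod>i<D. (Y div q ^ i mod q) choose (J div q ^ i mod q)) * ((Y div q ^ D) choose (J div q ^ D))
     = (\<Prod>i<Suc D. (Y div q ^ i mod q) choose (J div q ^ i mod q)) * ((Y div q ^ Suc D) choose (J div q ^ Suc D))] (mod p)"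
    by (simp add: cong_mult mult.assoc)
  then show ?case using Suc.IH cong_trans by blast
qed


lemma digits_sum:
  fixes q :: nat
  assumes "q > 0"
  shows "(\<forall>i<B. h i < q) \<Longrightarrow> (\<Sum>i<B. h i * q ^ i) div q ^ l mod q = (if l < B then h l else 0)"
proof (induction B arbitrary: h l)
  case 0
  then show ?case by simp
next
  case (Suc B)
  define S where "S = (\<Sum>i<B. h (Suc i) * q ^ i)"
  have eq: "(\<Sum>i<Suc B. h i * q ^ i) = h 0 + q * S"
    unfolding S_def by (subst sum.lessThan_Suc_shift) (simp add: sum_distrib_left mult.assoc mult.left_commute del: sum.lessThan_Suc)
  have h0: "h 0 < q" using Suc.prems by simp
  show ?case
  proof (cases l)
    case 0
    then show ?thesis using eq h0 by simp
  next
    case (Suc l')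
    have "(h 0 + q * S) div q ^ l = (h 0 + q * S) div q div q ^ l'"
      using Suc by (simp add: div_mult2_eq)
    also have "(h 0 + q * S) div q = S" using h0 assms by simp
    finally have "(h 0 + q * S) div q ^ l mod q = S div q ^ l' mod q" by simp
    also have "\<dots> = (if l' < B then h (Suc l') else 0)"
      unfolding S_def by (rule Suc.IH) (use Suc.prems in auto)
    finally show ?thesis using eq Suc by simp
  qed
qed

lemma digits_bound:
  fixes q :: nat
  assumes "q > 0"
  shows "(\<forall>i<B. h i < q) \<Longrightarrow> (\<Sum>i<B. h i * q ^ i) < q ^ B"
proof (induction B arbitrary: h)
  case 0
  then show ?case by simp
next
  case (Suc B)
  define S where "S = (\<Sum>i<B. h (Suc i) * q ^ i)"
  have eq: "(\<Sum>i<Suc B. h i * q ^ i) = h 0 + q * S"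
    unfolding S_def by (subst sum.lessThan_Suc_shift) (simp add: sum_distrib_left mult.assoc mult.left_commute del: sum.lessThan_Suc)
  have h0: "h 0 < q" using Suc.prems by simp
  have "S < q ^ B" unfolding S_def by (rule Suc.IH) (use Suc.prems in auto)
  then have "S + 1 \<le> q ^ B" by simp
  then have "q * (S + 1) \<le> q * q ^ B" by (rule mult_le_mono2)
  then show ?case using eq h0 by simp
qed

lemma lucas_full:
  fixes p q :: nat
  assumes "prime p" "q = p ^ e" "e \<ge> 1" "J < q ^ D"
  shows "[Y choose J = (\<Prod>i<D. (Y div q ^ i mod q) choose (J div q ^ i mod q))] (mod p)"
  using lucas_iter[OF assms(1-3), of Y J D] assms(4) by simp


lemma lt_pow_q:
  fixes q :: nat
  assumes "q \<ge> 2"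
  shows "j < q ^ j"
proof -
  have "j < 2 ^ j" by (rule less_exp)
  also have "2 ^ j \<le> q ^ j" using assms by (simp add: power_mono)
  finally show ?thesis .
qed

lemma key_rho:
  fixes p q :: nat and \<rho> :: "nat \<Rightarrow> nat"
  assumes "prime p" "q = p ^ e" "e \<ge> 1" "inj \<rho>" "j < D"
  shows "[Y choose rho_star q \<rho> j = (\<Sum>i<D. (Y div q ^ (\<rho> i) mod q) * q ^ i) choose j] (mod p)"
proof -
  define Y' where "Y' = (\<Sum>i<D. (Y div q ^ (\<rho> i) mod q) * q ^ i)"
  have q2: "q \<ge> 2"
  proof -
    have "p \<le> p ^ e" using assms(3) prime_gt_0_nat[OF assms(1)] by (simp add: self_le_power)
    then show ?thesis using prime_ge_2_nat[OF assms(1)] assms(2) by simp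
  qed
  then have q0: "q > 0" by simp
  have jD: "j < q ^ D"
  proof -
    have "j < q ^ j" using lt_pow_q[OF q2] .
    also have "q ^ j \<le> q ^ D" using q2 assms(5) by (simp add: power_increasing)
    finally show ?thesis .
  qed
  have c1: "[Y' choose j = (\<Prod>i<D. (Y' div q ^ i mod q) choose (j div q ^ i mod q))] (mod p)"
    by (rule lucas_full[OF assms(1-3) jD])
  have "(\<Prod>i<D. (Y' div q ^ i mod q) choose (j div q ^ i mod q))
      = (\<Prod>i<D. (Y div q ^ (\<rho> i) mod q) choose (j div q ^ i mod q))"
  proof (rule prod.cong)
    fix i assume "i \<in> {..<D}"
    then have "Y' div q ^ i mod q = Y div q ^ (\<rho> i) mod q"
      unfolding Y'_def using digits_sum[OF q0, of D "\<lambda>i. Y div q ^ (\<rho> i) mod q" i] q0 by simp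
    then show "(Y' div q ^ i mod q) choose (j div q ^ i mod q) = (Y div q ^ (\<rho> i) mod q) choose (j div q ^ i mod q)"
      by simp
  qed simp
  note c1 = c1[unfolded this]
  define A where "A = \<rho> ` {..<D}"
  define E where "E = Suc (Max A)"
  have finA: "finite A" unfolding A_def by simp
  have AE: "A \<subseteq> {..<E}" unfolding E_def using finA by (auto simp: less_Suc_eq_le)
  define h where "h l = (if l \<in> A then j div q ^ (inv \<rho> l) mod q else 0)" for l
  have hq: "\<forall>l<E. h l < q" unfolding h_def using q0 by auto
  have "rho_star q \<rho> j = (\<Sum>i\<le>j. (j div q ^ i mod q) * q ^ (\<rho> i))"
    unfolding rho_star_def ..
  also have "\<dots> = (\<Sum>i<D. (j div q ^ i mod q) * q ^ (\<rho> i))"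
  proof (rule sum.mono_neutral_left)
    show "\<forall>i\<in>{..<D} - {..j}. (j div q ^ i mod q) * q ^ (\<rho> i) = 0"
    proof
      fix i assume "i \<in> {..<D} - {..j}"
      then have "j < i" by auto
      also have "i < q ^ i" using lt_pow_q[OF q2] .
      finally show "(j div q ^ i mod q) * q ^ (\<rho> i) = 0" by simp
    qed
  qed (use assms(5) in auto)
  also have "\<dots> = (\<Sum>l\<in>A. (j div q ^ (inv \<rho> l) mod q) * q ^ l)"
    unfolding A_def using assms(4)
    by (subst sum.reindex) (auto simp: inj_on_def inv_f_f)
  also have "\<dots> = (\<Sum>l<E. h l * q ^ l)"
    by (rule sum.mono_neutral_cong_left) (use AE in \<open>auto simp: h_def\<close>)
  finally have J: "rho_star q \<rho> j = (\<Sum>l<E. h l * q ^ l)" .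
  have JE: "rho_star q \<rho> j < q ^ E" unfolding J by (rule digits_bound[OF q0 hq])
  have c2: "[Y choose rho_star q \<rho> j = (\<Prod>l<E. (Y div q ^ l mod q) choose (rho_star q \<rho> j div q ^ l mod q))] (mod p)"
    by (rule lucas_full[OF assms(1-3) JE])
  have "(\<Prod>l<E. (Y div q ^ l mod q) choose (rho_star q \<rho> j div q ^ l mod q))
      = (\<Prod>l<E. (Y div q ^ l mod q) choose h l)"
    by (rule prod.cong) (use digits_sum[OF q0 hq] J in auto)
  also have "\<dots> = (\<Prod>l\<in>A. (Y div q ^ l mod q) choose (j div q ^ (inv \<rho> l) mod q))"
    by (rule prod.mono_neutral_cong_right) (use AE in \<open>auto simp: h_def\<close>)
  also have "\<dots> = (\<Prod>i<D. (Y div q ^ (\<rho> i) mod q) choose (j div q ^ i mod q))"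
    unfolding A_def using assms(4)
    by (subst prod.reindex) (auto simp: inj_on_def inv_f_f)
  finally have c3: "[Y choose rho_star q \<rho> j = (\<Prod>i<D. (Y div q ^ (\<rho> i) mod q) choose (j div q ^ i mod q))] (mod p)"
    using c2 by simp
  show ?thesis using cong_trans[OF c3 cong_sym[OF c1]] unfolding Y'_def by simp
qed


lemma choose_prod_ident_nat:
  fixes Y M N :: nat
  shows "(Y choose M) * (Y choose N) =
    (\<Sum>k\<le>M. if k \<le> N then (M choose k) * ((M + N - k) choose M) * (Y choose (M + N - k)) else 0)"
proof -
  define f where "f k = (M choose k) * ((M + N - k) choose M) * (Y choose (M + N - k))" for k
  have L: "(Y choose M) * (Y choose N) = (\<Sum>k\<le>N. f k)"
  proof (cases "M \<le> Y")
    case False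
    then have "\<forall>k\<in>{..N}. f k = 0" unfolding f_def by (auto simp: binomial_eq_0)
    then show ?thesis using False by (simp add: binomial_eq_0)
  next
    case True
    have "Y choose N = (\<Sum>k\<le>N. (M choose k) * ((Y - M) choose (N - k)))"
      using vandermonde[of M "Y - M" N] True by simp
    then have "(Y choose M) * (Y choose N) = (\<Sum>k\<le>N. (M choose k) * ((Y choose M) * ((Y - M) choose (N - k))))"
      by (simp add: sum_distrib_left mult.left_commute)
    also have "\<dots> = (\<Sum>k\<le>N. f k)"
    proof (rule sum.cong)
      fix k assume k: "k \<in> {..N}"
      have "(Y choose M) * ((Y - M) choose (N - k)) = (Y choose (M + N - k)) * ((M + N - k) choose M)"
      proof (cases "M + N - k \<le> Y")
        case True
        then show ?thesis using choose_mult[of M "M + N - k" Y] k by (simp add: mult.commute)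
      next
        case False
        then have "Y - M < N - k" using k \<open>M \<le> Y\<close> by auto
        then show ?thesis using False by (simp add: binomial_eq_0)
      qed
      then show "(M choose k) * ((Y choose M) * ((Y - M) choose (N - k))) = f k"
        unfolding f_def by (simp add: mult_ac)
    qed simp
    finally show ?thesis .
  qed
  have "(\<Sum>k\<le>N. f k) = (\<Sum>k\<in>{k\<in>{..N}. k \<le> M}. f k)"
    by (rule sum.mono_neutral_right) (auto simp: f_def binomial_eq_0)
  also have "{k\<in>{..N}. k \<le> M} = {k\<in>{..M}. k \<le> N}" by auto
  also have "(\<Sum>k\<in>{k\<in>{..M}. k \<le> N}. f k) = (\<Sum>k\<le>M. if k \<le> N then f k else 0)"
    by (rule sum.inter_filter) simp
  finally show ?thesis using L unfolding f_def by simp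
qed

lemma multinom3_eq:
  fixes k M N :: nat
  assumes "k \<le> M"
  shows "multinom3 (int k) (int M - int k) (int N - int k) =
    (if k \<le> N then int ((M choose k) * ((M + N - k) choose M)) else 0)"
proof (cases "k \<le> N")
  case False
  then show ?thesis unfolding multinom3_def by simp
next
  case True
  have e: "nat (int k + (int M - int k) + (int N - int k)) = M + N - k" using True assms by simp
  have f1: "fact (M + N - k) = fact M * fact (N - k) * ((M + N - k) choose M)"
    using binomial_fact_lemma[of M "M + N - k"] True assms by simp
  have f2: "fact M = fact k * fact (M - k) * (M choose k)"
    using binomial_fact_lemma[of k M] assms by simp
  have "(fact (M + N - k) :: nat) = (fact k * fact (M - k) * fact (N - k)) * ((M choose k) * ((M + N - k) choose M))"
    using f1 f2 by (simp add: mult_ac)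
  then have "(fact (M + N - k) :: nat) div (fact k * fact (M - k) * fact (N - k)) = (M choose k) * ((M + N - k) choose M)"
    by simp
  then show ?thesis unfolding multinom3_def e using True assms
    by (simp add: nat_diff_distrib)
qed

lemma choose_prod_ident:
  fixes Y M N :: nat
  shows "int ((Y choose M) * (Y choose N)) =
    (\<Sum>k\<le>M. multinom3 (int k) (int M - int k) (int N - int k) * int (Y choose (M + N - k)))"
  unfolding choose_prod_ident_nat of_nat_sum
  by (rule sum.cong) (auto simp: multinom3_eq)


lemma zp_cong_from:
  fixes p :: nat and X W :: "nat \<Rightarrow> int"
  assumes p: "prime p"
    and cx: "\<And>t. [X t = X (Suc t)] (mod int p ^ t)"
    and cw: "\<And>t. [W t = W (Suc t)] (mod int p ^ t)"
    and c1: "[X 1 = W 1] (mod int p)"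
  shows "zp_cong_p p (\<lambda>t. X t mod int p ^ t) (\<lambda>t. W t mod int p ^ t)"
proof -
  define D where "D t = X t - W t" for t
  have p0: "int p > 0" using p prime_gt_0_nat by simp
  have cD: "[D t = D (Suc t)] (mod int p ^ t)" for t
    unfolding D_def using cx[of t] cw[of t] by (simp add: cong_diff)
  have dvd1: "int p dvd D (Suc s)" for s
  proof (induction s)
    case 0
    then show ?case using c1 unfolding D_def by (simp add: cong_iff_dvd_diff)
  next
    case (Suc s)
    have "[D (Suc s) = D (Suc (Suc s))] (mod int p)"
      using cD[of "Suc s"] by (rule cong_dvd_modulus) simp
    then show ?case using Suc.IH by (simp add: cong_dvd_iff)
  qed
  define z where "z t = (D (Suc t) div int p) mod int p ^ t" for t
  have zZ: "z \<in> Zp p"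
    unfolding Zp_def
  proof (intro CollectI allI conjI)
    fix t
    show "0 \<le> z t" unfolding z_def using p0 by simp
    show "z t < int p ^ t" unfolding z_def using p0 by simp
    obtain u where u: "D (Suc t) = int p * u" using dvd1 by blast
    have "int p ^ Suc t dvd D (Suc (Suc t)) - D (Suc t)"
      using cD[of "Suc t"] using cong_sym cong_iff_dvd_diff by blast
    then obtain r where "D (Suc (Suc t)) - D (Suc t) = int p ^ Suc t * r" by blast
    then have r: "D (Suc (Suc t)) = D (Suc t) + int p ^ Suc t * r" by simp
    have "D (Suc (Suc t)) div int p = u + int p ^ t * r"
      using r u p0 by (simp add: algebra_simps)
    moreover have "D (Suc t) div int p = u" using u p0 by simp
    ultimately have "(D (Suc (Suc t)) div int p) mod int p ^ t = (D (Suc t) div int p) mod int p ^ t"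
      by simp
    moreover have "((D (Suc (Suc t)) div int p) mod int p ^ Suc t) mod int p ^ t = (D (Suc (Suc t)) div int p) mod int p ^ t"
      by (rule mod_mod_cancel) simp
    ultimately show "z t = z (Suc t) mod int p ^ t" unfolding z_def by simp
  qed
  have eq: "X t mod int p ^ t = zp_add p (\<lambda>t. W t mod int p ^ t) (zp_mul p (zp_of_int p (int p)) z) t" for t
  proof -
    have "zp_add p (\<lambda>t. W t mod int p ^ t) (zp_mul p (zp_of_int p (int p)) z) t
       = (W t + int p * (D (Suc t) div int p)) mod int p ^ t"
      unfolding zp_add_def zp_mul_def zp_of_int_def z_def by (simp add: mod_simps)
    also have "int p * (D (Suc t) div int p) = D (Suc t)" using dvd1 by simp
    also have "(W t + D (Suc t)) mod int p ^ t = (W t + D t) mod int p ^ t"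
      using cD[of t] unfolding cong_def by (metis mod_add_right_eq)
    also have "W t + D t = X t" unfolding D_def by simp
    finally show ?thesis by simp
  qed
  show ?thesis unfolding zp_cong_p_def using zZ eq by blast
qed

lemma Zp_cong:
  fixes p :: nat
  assumes "y \<in> Zp p" "a \<le> b"
  shows "[y a = y b] (mod int p ^ a)"
  using assms(2)
proof (induction b)
  case 0
  then show ?case by simp
next
  case (Suc b)
  show ?case
  proof (cases "a = Suc b")
    case True
    then show ?thesis by simp
  next
    case False
    then have ab: "a \<le> b" using Suc.prems by simp
    have "y b = y (Suc b) mod int p ^ b" using assms(1) unfolding Zp_def by blast
    then have "[y b = y (Suc b)] (mod int p ^ b)" unfolding cong_def by simp
    then have "[y b = y (Suc b)] (mod int p ^ a)"
      by (rule cong_dvd_modulus) (simp add: ab le_imp_power_dvd)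
    then show ?thesis using Suc.IH[OF ab] cong_trans by blast
  qed
qed

lemma Zp_nonneg: "y \<in> Zp p \<Longrightarrow> 0 \<le> y k"
  unfolding Zp_def by blast

lemma Zp_cong_nat:
  fixes p :: nat
  assumes "y \<in> Zp p" "a \<le> b"
  shows "[nat (y a) = nat (y b)] (mod p ^ a)"
proof -
  have "[int (nat (y a)) = int (nat (y b))] (mod int (p ^ a))"
    using Zp_cong[OF assms] Zp_nonneg[OF assms(1)] by simp
  then show ?thesis by (simp only: cong_int_iff)
qed

lemma zp_binom_val:
  assumes "y \<in> Zp p"
  shows "zp_binom p y j t = int (nat (y (t + j)) choose j) mod int p ^ t"
proof -
  have "(of_int (y (t + j)) :: rat) = of_nat (nat (y (t + j)))"
    using Zp_nonneg[OF assms] by simp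
  moreover have "(of_nat (nat (y (t + j))) gchoose j :: rat) = of_nat (nat (y (t + j)) choose j)"
    by (rule binomial_gbinomial[symmetric])
  ultimately have "\<lfloor>(of_int (y (t + j)) :: rat) gchoose j\<rfloor> = int (nat (y (t + j)) choose j)"
    by (simp only: floor_of_nat)
  then show ?thesis unfolding zp_binom_def by simp
qed

lemma zp_sum_val:
  assumes "y \<in> Zp p"
  shows "zp_sum p (\<lambda>k. zp_mul p (zp_of_int p (c k)) (zp_binom p y (J k))) A
     = (\<lambda>t. (\<Sum>k\<in>A. c k * int (nat (y (t + J k)) choose J k)) mod int p ^ t)"
proof
  fix t
  show "zp_sum p (\<lambda>k. zp_mul p (zp_of_int p (c k)) (zp_binom p y (J k))) A t
     = (\<Sum>k\<in>A. c k * int (nat (y (t + J k)) choose J k)) mod int p ^ t"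
    unfolding zp_sum_def zp_mul_def zp_of_int_def zp_binom_val[OF assms]
    by (simp add: mod_simps)
qed

lemma sum_compat:
  fixes p :: nat
  assumes "prime p" "y \<in> Zp p"
  shows "[(\<Sum>k\<in>A. c k * int (nat (y (t + J k)) choose J k))
        = (\<Sum>k\<in>A. c k * int (nat (y (Suc t + J k)) choose J k))] (mod int p ^ t)"
proof (rule cong_sum, rule cong_mult)
  fix k
  have "[nat (y (t + J k)) = nat (y (Suc t + J k))] (mod p ^ (t + J k))"
    using Zp_cong_nat[OF assms(2), of "t + J k" "Suc t + J k"] by simp
  then have "[nat (y (t + J k)) choose J k = nat (y (Suc t + J k)) choose J k] (mod p ^ t)"
    by (rule choose_cong_pow[OF assms(1)])
  then have "[int (nat (y (t + J k)) choose J k) = int (nat (y (Suc t + J k)) choose J k)] (mod int (p ^ t))"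
    by (simp only: cong_int_iff)
  then show "[int (nat (y (t + J k)) choose J k) = int (nat (y (Suc t + J k)) choose J k)] (mod int p ^ t)"
    by simp
qed simp


lemma level1_sum:
  fixes p :: nat
  assumes "prime p" "y \<in> Zp p" "\<forall>k\<in>A. 1 + J k \<le> L"
  shows "[(\<Sum>k\<in>A. c k * int (nat (y (1 + J k)) choose J k))
        = (\<Sum>k\<in>A. c k * int (nat (y L) choose J k))] (mod int p)"
proof (rule cong_sum, rule cong_mult)
  fix k assume k: "k \<in> A"
  have "[nat (y (1 + J k)) = nat (y L)] (mod p ^ (1 + J k))"
    using Zp_cong_nat[OF assms(2)] assms(3) k by blast
  then have "[nat (y (1 + J k)) choose J k = nat (y L) choose J k] (mod p ^ 1)"
    by (rule choose_cong_pow[OF assms(1)])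
  then have "[int (nat (y (1 + J k)) choose J k) = int (nat (y L) choose J k)] (mod int p)"
    by (simp add: cong_int_iff)
  then show "[int (nat (y (1 + J k)) choose J k) = int (nat (y L) choose J k)] (mod int p)" .
qed simp

theorem proposition7p5:
  fixes p m0 q :: nat and \<rho> :: "nat \<Rightarrow> nat" and n m :: nat and y :: "nat \<Rightarrow> int"
  assumes "prime p" and "m0 \<ge> 1" and "q = p ^ m0"
    and "bij \<rho>"
    and "y \<in> Zp p"
  shows "zp_cong_p p
     (zp_sum p (\<lambda>k. zp_mul p
          (zp_of_int p (multinom3 (int k) (int m - int k) (int n - int k)))
          (zp_binom p y (rho_star q \<rho> (m + n - k)))) {..m})
     (let M = rho_star q \<rho> m; N = rho_star q \<rho> n in
      zp_sum p (\<lambda>k. zp_mul p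
          (zp_of_int p (multinom3 (int k) (int M - int k) (int N - int k)))
          (zp_binom p y (M + N - k))) {..M})"
proof -
  define M where "M = rho_star q \<rho> m"
  define N where "N = rho_star q \<rho> n"
  define c1 where "c1 k = multinom3 (int k) (int m - int k) (int n - int k)" for k
  define J1 where "J1 k = rho_star q \<rho> (m + n - k)" for k
  define c2 where "c2 k = multinom3 (int k) (int M - int k) (int N - int k)" for k
  define J2 where "J2 k = M + N - k" for k
  define X where "X t = (\<Sum>k\<le>m. c1 k * int (nat (y (t + J1 k)) choose J1 k))" for t
  define W where "W t = (\<Sum>k\<le>M. c2 k * int (nat (y (t + J2 k)) choose J2 k))" for t
  have inj: "inj \<rho>" using assms(4) bij_is_inj by blast
  have e1: "zp_sum p (\<lambda>k. zp_mul p
          (zp_of_int p (multinom3 (int k) (int m - int k) (int n - int k)))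
          (zp_binom p y (rho_star q \<rho> (m + n - k)))) {..m} = (\<lambda>t. X t mod int p ^ t)"
    using zp_sum_val[OF assms(5), where c = c1 and J = J1 and A = "{..m}"]
    unfolding X_def c1_def J1_def by simp
  have e2: "(let M = rho_star q \<rho> m; N = rho_star q \<rho> n in
      zp_sum p (\<lambda>k. zp_mul p
          (zp_of_int p (multinom3 (int k) (int M - int k) (int N - int k)))
          (zp_binom p y (M + N - k))) {..M}) = (\<lambda>t. W t mod int p ^ t)"
    using zp_sum_val[OF assms(5), where c = c2 and J = J2 and A = "{..M}"]
    unfolding W_def c2_def J2_def M_def N_def Let_def by simp
  define L where "L = Suc (M + N + (\<Sum>k\<le>m. J1 k))"
  define Yn where "Yn = nat (y L)"
  define D where "D = Suc (m + n)"
  define Y' where "Y' = (\<Sum>i<D. (Yn div q ^ (\<rho> i) mod q) * q ^ i)"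
  have key: "j < D \<Longrightarrow> [int (Yn choose rho_star q \<rho> j) = int (Y' choose j)] (mod int p)" for j
    using key_rho[OF assms(1) assms(3) assms(2) inj, of j D Yn] unfolding Y'_def
    by (simp add: cong_int_iff)
  have "[X 1 = (\<Sum>k\<le>m. c1 k * int (Yn choose J1 k))] (mod int p)"
    unfolding X_def Yn_def
  proof (rule level1_sum[OF assms(1) assms(5)])
    show "\<forall>k\<in>{..m}. 1 + J1 k \<le> L"
    proof
      fix k assume "k \<in> {..m}"
      then have "J1 k \<le> (\<Sum>k\<le>m. J1 k)" by (intro member_le_sum) auto
      then show "1 + J1 k \<le> L" unfolding L_def by simp
    qed
  qed
  also have "[(\<Sum>k\<le>m. c1 k * int (Yn choose J1 k)) = (\<Sum>k\<le>m. c1 k * int (Y' choose (m + n - k)))] (mod int p)"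
    unfolding J1_def by (rule cong_sum, rule cong_mult) (auto intro: key simp: D_def)
  also have "(\<Sum>k\<le>m. c1 k * int (Y' choose (m + n - k))) = int ((Y' choose m) * (Y' choose n))"
    unfolding c1_def by (rule choose_prod_ident[symmetric])
  also have "[int ((Y' choose m) * (Y' choose n)) = int ((Yn choose M) * (Yn choose N))] (mod int p)"
    unfolding of_nat_mult M_def N_def
    by (rule cong_mult; rule cong_sym, rule key) (simp_all add: D_def)
  also have "int ((Yn choose M) * (Yn choose N)) = (\<Sum>k\<le>M. c2 k * int (Yn choose J2 k))"
    unfolding c2_def J2_def by (rule choose_prod_ident)
  also have "[(\<Sum>k\<le>M. c2 k * int (Yn choose J2 k)) = W 1] (mod int p)"
    unfolding W_def Yn_def
  proof (rule cong_sym, rule level1_sum[OF assms(1) assms(5)])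
    show "\<forall>k\<in>{..M}. 1 + J2 k \<le> L" unfolding J2_def L_def by auto
  qed
  finally have c: "[X 1 = W 1] (mod int p)" .
  have cx: "[X t = X (Suc t)] (mod int p ^ t)" for t
    unfolding X_def by (rule sum_compat[OF assms(1) assms(5)])
  have cw: "[W t = W (Suc t)] (mod int p ^ t)" for t
    unfolding W_def by (rule sum_compat[OF assms(1) assms(5)])
  show ?thesis unfolding e1 e2 by (rule zp_cong_from[OF assms(1) cx cw c])
qed

end
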